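(* Let $\Omega\subset\mathbb{R}^n$ be a bounded, connected open set with $C^1$ boundary, let $\varphi\in\Phi_w(\Omega)$ satisfy (A0), let $\alpha=(\alpha_1,\alpha_2)\in\mathbb{R}^+\times\mathbb{R}^+$ and let $1<p\le\frac{n}{n-1}$. Let $H$ be a Hilbert space, let $K:L^p(\Omega)\to H$ be a bounded linear operator injective on the space $\mathcal{P}^1(\Omega)$ of affine functions, and let $(f_k)_k\subset H$ with $f_k\to f$ strongly in $H$. Define, for $u\in L^p(\Omega)$, $$\mathcal{F}_k(u):=\frac12\|Ku-f_k\|_H+TGV^{\varphi,2}_\alpha(u),\qquad \mathcal{F}_0(u):=\frac12\|Ku-f\|_H+TGV^{\varphi,2}_\alpha(u).$$ Then $(\mathcal{F}_k)_k$ $\Gamma$-converges to $\mathcal{F}_0$ with respect to the weak topology of $L^p(\Omega)$.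
   Context: $\varphi\in\Phi_w(\Omega)$ means $\varphi:\Omega\times[0,\infty)\to[0,\infty]$ with: $x\mapsto\varphi(x,|f(x)|)$ measurable for every measurable $f$; $t\mapsto\varphi(x,t)$ non-decreasing; $\varphi(x,0)=\lim_{t\to0^+}\varphi(x,t)=0$, $\lim_{t\to\infty}\varphi(x,t)=\infty$ for every $x$; there is $L\ge1$ independent of $x$ with $\varphi(x,s)/s\le L\varphi(x,t)/t$ for $0<s\le t$. (A0): there is $\beta\in(0,1]$ with $\varphi(x,\beta)\le1\le\varphi(x,1/\beta)$ for all $x$. Conjugate $\varphi^*(x,t)=\sup_{s\ge0}(st-\varphi(x,s))$; $\|f\|_{\varphi^*}=\inf\{\lambda>0:\int_\Omega\varphi^*(x,|f|/\lambda)dx\le1\}$ ($|\cdot|$ Euclidean/Frobenius norm). $TGV^{\varphi,2}_\alpha(u)=\sup\{\int_\Omega u\,\mathrm{div}^2\psi\,dx:\psi\in C^2_c(\Omega;\mathbb{R}^{n\times n}_{\rm sym}),\|\psi\|_{\varphi^*}\le\alpha_1,\|\mathrm{div}\,\psi\|_{\varphi^*}\le\alpha_2\}$, with $(\mathrm{div}\,\psi)_i=\sum_j\partial_j\psi_{ij}$, $\mathrm{div}^2\psi=\sum_i\partial_{ii}\psi_{ii}+2\sum_{i<j}\partial_{ij}\psi_{ij}$. *)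

theory Defs
  imports "HOL-Analysis.Analysis" "HOL-Probability.Probability"
begin

text \<open>Omega has C^1 boundary: near every boundary point x0, after choosing a unit
  normal direction e, Omega is the (strict) epigraph over the hyperplane orthogonal to e
  of a continuously differentiable function gamma.\<close>
definition C1_boundary :: "(real^'n::finite) set \<Rightarrow> bool" where
  "C1_boundary \<Omega> \<longleftrightarrow>
     (\<forall>x0\<in>frontier \<Omega>. \<exists>r>0. \<exists>e::real^'n. \<exists>\<gamma>::real^'n \<Rightarrow> real. \<exists>g::real^'n \<Rightarrow> real^'n.
        norm e = 1 \<and>
        (\<forall>x. (\<gamma> has_derivative (\<lambda>h. g x \<bullet> h)) (at x)) \<and> continuous_on UNIV g \<and>
        \<Omega> \<inter> ball x0 r = {x \<in> ball x0 r. x \<bullet> e > \<gamma> (x - (x \<bullet> e) *\<^sub>R e)})"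

definition Phi_w :: "(real^'n::finite) set \<Rightarrow> (real^'n \<Rightarrow> real \<Rightarrow> ereal) \<Rightarrow> bool" where
  "Phi_w \<Omega> \<phi> \<longleftrightarrow>
     (\<forall>f \<in> borel_measurable (lebesgue_on \<Omega>).
         (\<lambda>x. \<phi> x \<bar>f x\<bar>) \<in> borel_measurable (lebesgue_on \<Omega>)) \<and>
     (\<forall>x\<in>\<Omega>. \<forall>t\<ge>0. \<phi> x t \<ge> 0) \<and>
     (\<forall>x\<in>\<Omega>. \<forall>s t. 0 \<le> s \<and> s \<le> t \<longrightarrow> \<phi> x s \<le> \<phi> x t) \<and>
     (\<forall>x\<in>\<Omega>. \<phi> x 0 = 0 \<and> ((\<lambda>t. \<phi> x t) \<longlongrightarrow> 0) (at_right 0)) \<and>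
     (\<forall>x\<in>\<Omega>. ((\<lambda>t. \<phi> x t) \<longlongrightarrow> \<infinity>) at_top) \<and>
     (\<exists>L\<ge>1. \<forall>x\<in>\<Omega>. \<forall>s t. 0 < s \<and> s \<le> t \<longrightarrow>
         \<phi> x s / ereal s \<le> ereal L * (\<phi> x t / ereal t))"

definition A0 :: "(real^'n::finite) set \<Rightarrow> (real^'n \<Rightarrow> real \<Rightarrow> ereal) \<Rightarrow> bool" where
  "A0 \<Omega> \<phi> \<longleftrightarrow> (\<exists>\<beta>. 0 < \<beta> \<and> \<beta> \<le> 1 \<and>
      (\<forall>x\<in>\<Omega>. \<phi> x \<beta> \<le> 1 \<and> 1 \<le> \<phi> x (1 / \<beta>)))"

definition conj_phi :: "(real^'n::finite \<Rightarrow> real \<Rightarrow> ereal) \<Rightarrow> real^'n \<Rightarrow> real \<Rightarrow> ereal" where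
  "conj_phi \<phi> x t = (SUP s\<in>{0..}. ereal (s * t) - \<phi> x s)"

text \<open>Luxemburg norm on Omega of a function given by its pointwise modulus g = |f|.\<close>
definition lux_norm ::
  "(real^'n::finite) set \<Rightarrow> (real^'n \<Rightarrow> real \<Rightarrow> ereal) \<Rightarrow> (real^'n \<Rightarrow> real) \<Rightarrow> ereal" where
  "lux_norm \<Omega> \<psi> g = Inf (ereal ` {l. l > 0 \<and>
      (\<integral>\<^sup>+ x\<in>\<Omega>. e2ennreal (\<psi> x (g x / l)) \<partial>lebesgue) \<le> 1})"

definition pd :: "'n::finite \<Rightarrow> (real^'n \<Rightarrow> real) \<Rightarrow> real^'n \<Rightarrow> real" where
  "pd j f x = frechet_derivative f (at x) (axis j 1)"

definition C1_on :: "(real^'n::finite) set \<Rightarrow> (real^'n \<Rightarrow> real) \<Rightarrow> bool" where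
  "C1_on U f \<longleftrightarrow> (\<forall>x\<in>U. f differentiable (at x)) \<and> (\<forall>j. continuous_on U (pd j f))"

definition C2_on :: "(real^'n::finite) set \<Rightarrow> (real^'n \<Rightarrow> real) \<Rightarrow> bool" where
  "C2_on U f \<longleftrightarrow> C1_on U f \<and> (\<forall>j. C1_on U (pd j f))"

definition C2c_sym :: "(real^'n::finite) set \<Rightarrow> (real^'n \<Rightarrow> real^'n^'n) set" where
  "C2c_sym \<Omega> = {\<psi>. (\<forall>i j. C2_on \<Omega> (\<lambda>x. \<psi> x $ i $ j)) \<and>
       (\<forall>x. transpose (\<psi> x) = \<psi> x) \<and>
       compact (closure {x. \<psi> x \<noteq> 0}) \<and> closure {x. \<psi> x \<noteq> 0} \<subseteq> \<Omega>}"

definition div1 :: "(real^'n::finite \<Rightarrow> real^'n^'n) \<Rightarrow> real^'n \<Rightarrow> real^'n" where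
  "div1 \<psi> x = (\<chi> i. \<Sum>j\<in>UNIV. pd j (\<lambda>y. \<psi> y $ i $ j) x)"

text \<open>div^2 psi = sum_{i,j} d_i d_j psi_ij (for symmetric C^2 fields this equals
  sum_i d_ii psi_ii + 2 sum_{i<j} d_ij psi_ij).\<close>
definition div2 :: "(real^'n::finite \<Rightarrow> real^'n^'n) \<Rightarrow> real^'n \<Rightarrow> real" where
  "div2 \<psi> x = (\<Sum>i\<in>UNIV. \<Sum>j\<in>UNIV. pd i (pd j (\<lambda>y. \<psi> y $ i $ j)) x)"

definition TGV ::
  "(real^'n::finite) set \<Rightarrow> (real^'n \<Rightarrow> real \<Rightarrow> ereal) \<Rightarrow> real \<Rightarrow> real \<Rightarrow> (real^'n \<Rightarrow> real) \<Rightarrow> ereal" where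
  "TGV \<Omega> \<phi> \<alpha>1 \<alpha>2 u = (SUP \<psi> \<in> {\<psi> \<in> C2c_sym \<Omega>.
        lux_norm \<Omega> (conj_phi \<phi>) (\<lambda>x. norm (\<psi> x)) \<le> ereal \<alpha>1 \<and>
        lux_norm \<Omega> (conj_phi \<phi>) (\<lambda>x. norm (div1 \<psi> x)) \<le> ereal \<alpha>2}.
      ereal (\<integral>x\<in>\<Omega>. u x * div2 \<psi> x \<partial>lebesgue))"

definition Lp :: "(real^'n::finite) set \<Rightarrow> real \<Rightarrow> (real^'n \<Rightarrow> real) set" where
  "Lp \<Omega> p = {u. u \<in> borel_measurable (lebesgue_on \<Omega>) \<and>
                 integrable (lebesgue_on \<Omega>) (\<lambda>x. \<bar>u x\<bar> powr p)}"

definition Lp_norm :: "(real^'n::finite) set \<Rightarrow> real \<Rightarrow> (real^'n \<Rightarrow> real) \<Rightarrow> real" where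
  "Lp_norm \<Omega> p u = (\<integral>x. \<bar>u x\<bar> powr p \<partial>lebesgue_on \<Omega>) powr (1 / p)"

definition weak_conv_Lp ::
  "(real^'n::finite) set \<Rightarrow> real \<Rightarrow> (nat \<Rightarrow> real^'n \<Rightarrow> real) \<Rightarrow> (real^'n \<Rightarrow> real) \<Rightarrow> bool" where
  "weak_conv_Lp \<Omega> p us u \<longleftrightarrow>
     (\<forall>g \<in> Lp \<Omega> (p / (p - 1)).
        (\<lambda>k. \<integral>x. us k x * g x \<partial>lebesgue_on \<Omega>) \<longlonglongrightarrow> (\<integral>x. u x * g x \<partial>lebesgue_on \<Omega>))"

text \<open>Bounded linear operator L^p(Omega) -> H (acting on representatives, compatible with
  a.e. equality).\<close>
definition bounded_linear_Lp ::
  "(real^'n::finite) set \<Rightarrow> real \<Rightarrow> ((real^'n \<Rightarrow> real) \<Rightarrow> 'h::real_normed_vector) \<Rightarrow> bool" where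
  "bounded_linear_Lp \<Omega> p K \<longleftrightarrow>
     (\<forall>u\<in>Lp \<Omega> p. \<forall>v\<in>Lp \<Omega> p. K (\<lambda>x. u x + v x) = K u + K v) \<and>
     (\<forall>u\<in>Lp \<Omega> p. \<forall>c. K (\<lambda>x. c * u x) = c *\<^sub>R K u) \<and>
     (\<forall>u\<in>Lp \<Omega> p. \<forall>v\<in>Lp \<Omega> p. (AE x in lebesgue_on \<Omega>. u x = v x) \<longrightarrow> K u = K v) \<and>
     (\<exists>C. \<forall>u\<in>Lp \<Omega> p. norm (K u) \<le> C * Lp_norm \<Omega> p u)"

definition affine_fns :: "(real^'n::finite \<Rightarrow> real) set" where
  "affine_fns = {(\<lambda>x. a \<bullet> x + b) | a b. True}"

definition injective_on_affine ::
  "(real^'n::finite) set \<Rightarrow> ((real^'n \<Rightarrow> real) \<Rightarrow> 'h) \<Rightarrow> bool" where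
  "injective_on_affine \<Omega> K \<longleftrightarrow>
     (\<forall>v\<in>affine_fns. \<forall>w\<in>affine_fns. K v = K w \<longrightarrow> (AE x in lebesgue_on \<Omega>. v x = w x))"

definition Gamma_conv_weak_Lp ::
  "(real^'n::finite) set \<Rightarrow> real \<Rightarrow> (nat \<Rightarrow> (real^'n \<Rightarrow> real) \<Rightarrow> ereal)
     \<Rightarrow> ((real^'n \<Rightarrow> real) \<Rightarrow> ereal) \<Rightarrow> bool" where
  "Gamma_conv_weak_Lp \<Omega> p F F0 \<longleftrightarrow>
     (\<forall>u\<in>Lp \<Omega> p.
        (\<forall>us. (\<forall>k. us k \<in> Lp \<Omega> p) \<and> weak_conv_Lp \<Omega> p us u \<longrightarrow>
              F0 u \<le> liminf (\<lambda>k. F k (us k))) \<and>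
        (\<exists>us. (\<forall>k. us k \<in> Lp \<Omega> p) \<and> weak_conv_Lp \<Omega> p us u \<and>
              limsup (\<lambda>k. F k (us k)) \<le> F0 u))"

end

theory Submission
  imports Defs
begin


lemma Lp_mult_integrable:
  fixes u g :: "real^'n::finite \<Rightarrow> real"
  assumes p: "1 < p" and u: "u \<in> Lp \<Omega> p" and g: "g \<in> Lp \<Omega> (p/(p-1))"
  shows "integrable (lebesgue_on \<Omega>) (\<lambda>x. u x * g x)"
proof -
  define q where "q = p/(p-1)"
  have q: "q > 1" "1/p + 1/q = 1" using p by (auto simp: q_def field_simps)
  have um: "u \<in> borel_measurable (lebesgue_on \<Omega>)" and ui: "integrable (lebesgue_on \<Omega>) (\<lambda>x. \<bar>u x\<bar> powr p)"
    using u by (auto simp: Lp_def)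
  have gm: "g \<in> borel_measurable (lebesgue_on \<Omega>)" and gi: "integrable (lebesgue_on \<Omega>) (\<lambda>x. \<bar>g x\<bar> powr q)"
    using g by (auto simp: Lp_def q_def)
  show ?thesis
  proof (rule Bochner_Integration.integrable_bound)
    show "integrable (lebesgue_on \<Omega>) (\<lambda>x. \<bar>u x\<bar> powr p / p + \<bar>g x\<bar> powr q / q)"
      using ui gi by auto
    show "(\<lambda>x. u x * g x) \<in> borel_measurable (lebesgue_on \<Omega>)" using um gm by measurable
    show "AE x in lebesgue_on \<Omega>. norm (u x * g x) \<le> norm (\<bar>u x\<bar> powr p / p + \<bar>g x\<bar> powr q / q)"
    proof (rule AE_I2)
      fix x
      have "\<bar>u x\<bar> * \<bar>g x\<bar> \<le> \<bar>u x\<bar> powr p / p + \<bar>g x\<bar> powr q / q"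
        by (rule Youngs_inequality) (use p q in auto)
      moreover have "0 \<le> \<bar>u x\<bar> powr p / p + \<bar>g x\<bar> powr q / q" using p q by auto
      ultimately show "norm (u x * g x) \<le> norm (\<bar>u x\<bar> powr p / p + \<bar>g x\<bar> powr q / q)"
        by (simp add: abs_mult)
    qed
  qed
qed

lemma bounded_in_Lp:
  fixes u :: "real^'n::finite \<Rightarrow> real"
  assumes \<Omega>: "\<Omega> \<in> lmeasurable" and um: "u \<in> borel_measurable (lebesgue_on \<Omega>)"
    and B: "\<And>x. x \<in> \<Omega> \<Longrightarrow> \<bar>u x\<bar> \<le> B" and p: "0 < p"
  shows "u \<in> Lp \<Omega> p"
proof -
  interpret finite_measure "lebesgue_on \<Omega>" using finite_measure_lebesgue_on[OF \<Omega>] .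
  have "integrable (lebesgue_on \<Omega>) (\<lambda>x. \<bar>u x\<bar> powr p)"
  proof (rule Bochner_Integration.integrable_bound)
    show "integrable (lebesgue_on \<Omega>) (\<lambda>x. \<bar>B\<bar> powr p)" by simp
    show "(\<lambda>x. \<bar>u x\<bar> powr p) \<in> borel_measurable (lebesgue_on \<Omega>)" using um by measurable
    show "AE x in lebesgue_on \<Omega>. norm (\<bar>u x\<bar> powr p) \<le> norm (\<bar>B\<bar> powr p)"
    proof (rule AE_I2)
      fix x assume "x \<in> space (lebesgue_on \<Omega>)"
      then have "x \<in> \<Omega>" by simp
      then have "\<bar>u x\<bar> \<le> \<bar>B\<bar>" using B by force
      then show "norm (\<bar>u x\<bar> powr p) \<le> norm (\<bar>B\<bar> powr p)"
        using p by (simp add: powr_mono2)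
    qed
  qed
  then show ?thesis using um by (simp add: Lp_def)
qed

lemma dom_in_Lp:
  fixes v w :: "real^'n::finite \<Rightarrow> real"
  assumes v: "v \<in> Lp \<Omega> p" and wm: "w \<in> borel_measurable (lebesgue_on \<Omega>)"
    and B: "\<And>x. x \<in> \<Omega> \<Longrightarrow> \<bar>w x\<bar> \<le> c * \<bar>v x\<bar>" and p: "0 < p"
  shows "w \<in> Lp \<Omega> p"
proof -
  have vi: "integrable (lebesgue_on \<Omega>) (\<lambda>x. \<bar>v x\<bar> powr p)" using v by (simp add: Lp_def)
  have "integrable (lebesgue_on \<Omega>) (\<lambda>x. \<bar>w x\<bar> powr p)"
  proof (rule Bochner_Integration.integrable_bound)
    show "integrable (lebesgue_on \<Omega>) (\<lambda>x. \<bar>c\<bar> powr p * \<bar>v x\<bar> powr p)" using vi by simp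
    show "(\<lambda>x. \<bar>w x\<bar> powr p) \<in> borel_measurable (lebesgue_on \<Omega>)" using wm by measurable
    show "AE x in lebesgue_on \<Omega>. norm (\<bar>w x\<bar> powr p) \<le> norm (\<bar>c\<bar> powr p * \<bar>v x\<bar> powr p)"
    proof (rule AE_I2)
      fix x assume "x \<in> space (lebesgue_on \<Omega>)"
      then have "x \<in> \<Omega>" by simp
      then have "\<bar>w x\<bar> \<le> \<bar>c\<bar> * \<bar>v x\<bar>" using B[of x]
        by (metis abs_ge_self abs_ge_zero dual_order.trans mult_right_mono)
      then have "\<bar>w x\<bar> powr p \<le> (\<bar>c\<bar> * \<bar>v x\<bar>) powr p" using p by (simp add: powr_mono2)
      then show "norm (\<bar>w x\<bar> powr p) \<le> norm (\<bar>c\<bar> powr p * \<bar>v x\<bar> powr p)"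
        by (simp add: powr_mult)
    qed
  qed
  then show ?thesis using wm by (simp add: Lp_def)
qed



lemma (in finite_measure) pos_part_density:
  fixes \<nu> :: "'a set \<Rightarrow> real"
  assumes add: "\<And>A B. A \<in> sets M \<Longrightarrow> B \<in> sets M \<Longrightarrow> A \<inter> B = {} \<Longrightarrow> \<nu> (A \<union> B) = \<nu> A + \<nu> B"
    and bnd: "\<And>A. A \<in> sets M \<Longrightarrow> \<nu> A \<le> C * measure M A powr e"
    and e: "0 < e" and C: "0 \<le> C"
  shows "\<exists>r. integrable M r \<and>
     (\<forall>A\<in>sets M. \<forall>B\<in>sets M. B \<subseteq> A \<longrightarrow> \<nu> B \<le> (\<integral>x. indicator A x * r x \<partial>M)) \<and>
     (\<forall>A\<in>sets M. \<forall>z. (\<forall>B\<in>sets M. B \<subseteq> A \<longrightarrow> \<nu> B \<le> z) \<longrightarrow> (\<integral>x. indicator A x * r x \<partial>M) \<le> z)"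
proof -
  define P where "P A = (SUP B\<in>{B\<in>sets M. B \<subseteq> A}. \<nu> B)" for A
  have nu0: "\<nu> {} = 0" using add[of "{}" "{}"] by simp
  have bdd: "bdd_above (\<nu> ` {B\<in>sets M. B \<subseteq> A})" for A
  proof (rule bdd_aboveI2)
    fix B assume "B \<in> {B\<in>sets M. B \<subseteq> A}"
    then have "\<nu> B \<le> C * measure M B powr e" using bnd by auto
    also have "\<dots> \<le> C * measure M (space M) powr e"
      using \<open>B \<in> _\<close> C e by (auto intro!: mult_left_mono powr_mono2 bounded_measure)
    finally show "\<nu> B \<le> C * measure M (space M) powr e" .
  qed
  have ne: "{B\<in>sets M. B \<subseteq> A} \<noteq> {}" for A by auto
  have P_upper: "\<nu> B \<le> P A" if "B \<in> sets M" "B \<subseteq> A" for A B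
    unfolding P_def using that bdd by (intro cSUP_upper) auto
  have P_nonneg: "0 \<le> P A" for A using P_upper[of "{}" A] nu0 by simp
  have P_bnd: "P A \<le> C * measure M A powr e" if "A \<in> sets M" for A
    unfolding P_def
  proof (rule cSUP_least[OF ne])
    fix B assume "B \<in> {B\<in>sets M. B \<subseteq> A}"
    then have "\<nu> B \<le> C * measure M B powr e" using bnd by auto
    also have "\<dots> \<le> C * measure M A powr e"
      using \<open>B \<in> _\<close> that C e by (auto intro!: mult_left_mono powr_mono2 finite_measure_mono)
    finally show "\<nu> B \<le> C * measure M A powr e" .
  qed
  have P_add: "P (A \<union> B) = P A + P B" if AB: "A \<in> sets M" "B \<in> sets M" "A \<inter> B = {}" for A B
  proof (rule antisym)
    show "P (A \<union> B) \<le> P A + P B"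
      unfolding P_def[of "A \<union> B"]
    proof (rule cSUP_least[OF ne])
      fix D assume D: "D \<in> {B'\<in>sets M. B' \<subseteq> A \<union> B}"
      have "D = (D \<inter> A) \<union> (D \<inter> B)" using D by auto
      then have "\<nu> D = \<nu> (D \<inter> A) + \<nu> (D \<inter> B)"
        using add[of "D \<inter> A" "D \<inter> B"] D AB by auto
      also have "\<dots> \<le> P A + P B"
        using D AB by (intro add_mono P_upper) auto
      finally show "\<nu> D \<le> P A + P B" .
    qed
    have "\<nu> D1 + \<nu> D2 \<le> P (A \<union> B)" if "D1 \<in> sets M" "D1 \<subseteq> A" "D2 \<in> sets M" "D2 \<subseteq> B" for D1 D2
    proof -
      have "D1 \<inter> D2 = {}" using that AB by blast
      then have "\<nu> D1 + \<nu> D2 = \<nu> (D1 \<union> D2)" using add[of D1 D2] that by auto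
      also have "\<dots> \<le> P (A \<union> B)" using that by (intro P_upper) auto
      finally show ?thesis .
    qed
    then have "P A \<le> P (A \<union> B) - \<nu> D2" if "D2 \<in> sets M" "D2 \<subseteq> B" for D2
      unfolding P_def[of A] using that by (intro cSUP_least[OF ne]) force
    then have "\<nu> D2 \<le> P (A \<union> B) - P A" if "D2 \<in> sets M" "D2 \<subseteq> B" for D2
      using that by force
    then have "P B \<le> P (A \<union> B) - P A"
      unfolding P_def[of B] by (intro cSUP_least[OF ne]) auto
    then show "P A + P B \<le> P (A \<union> B)" by simp
  qed
  define mu where "mu A = ennreal (P A)" for A
  have pos: "positive (sets M) mu"
  proof -
    have "P {} \<le> 0" using P_bnd[of "{}"] e by simp
    then show ?thesis using P_nonneg[of "{}"] by (simp add: positive_def mu_def)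
  qed
  have additive: "additive (sets M) mu"
    unfolding additive_def mu_def using P_add P_nonneg by (simp add: ennreal_plus)
  have ca: "countably_additive (sets M) mu"
  proof (rule sets.empty_continuous_imp_countably_additive[OF pos additive])
    show "\<forall>A\<in>sets M. mu A \<noteq> \<infinity>" by (simp add: mu_def)
    fix A :: "nat \<Rightarrow> 'a set" assume A: "range A \<subseteq> sets M" "decseq A" "(\<Inter>i. A i) = {}"
    have "(\<lambda>i. measure M (A i)) \<longlonglongrightarrow> measure M (\<Inter>i. A i)"
      by (rule finite_Lim_measure_decseq[OF A(1,2)])
    then have m0: "(\<lambda>i. measure M (A i)) \<longlonglongrightarrow> 0" using A(3) by simp
    have "(\<lambda>i. C * measure M (A i) powr e) \<longlonglongrightarrow> C * 0"
      by (intro tendsto_mult tendsto_const tendsto_zero_powrI[OF m0]) (use e in auto)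
    then have up: "(\<lambda>i. C * measure M (A i) powr e) \<longlonglongrightarrow> 0" by simp
    have "(\<lambda>i. P (A i)) \<longlonglongrightarrow> 0"
    proof (rule real_tendsto_sandwich[OF _ _ tendsto_const up])
      show "\<forall>\<^sub>F i in sequentially. 0 \<le> P (A i)" using P_nonneg by simp
      show "\<forall>\<^sub>F i in sequentially. P (A i) \<le> C * measure M (A i) powr e"
        using P_bnd A(1) by (auto intro!: always_eventually)
    qed
    then show "(\<lambda>i. mu (A i)) \<longlonglongrightarrow> 0"
      unfolding mu_def by (metis ennreal_0 tendsto_ennrealI)
  qed
  define N where "N = measure_of (space M) (sets M) mu"
  have sN: "sets N = sets M" unfolding N_def by (simp add: sets.space_closed)
  have eN: "emeasure N A = mu A" if "A \<in> sets M" for A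
    unfolding N_def by (rule emeasure_measure_of_sigma[OF sets.sigma_algebra_axioms pos ca that])
  have ac: "absolutely_continuous M N"
    unfolding absolutely_continuous_def
  proof
    fix A assume "A \<in> null_sets M"
    then have A: "A \<in> sets M" "measure M A = 0" by (auto simp: measure_def)
    then have "P A \<le> 0" using P_bnd[of A] e by simp
    then have "P A = 0" using P_nonneg[of A] by simp
    then show "A \<in> null_sets N" using A eN[of A] sN by (simp add: mu_def null_sets_def)
  qed
  obtain f where fm: "f \<in> borel_measurable M" and fd: "density M f = N"
    using Radon_Nikodym[OF ac sN] by blast
  have int_f: "ennreal (P A) = (\<integral>\<^sup>+x. f x * indicator A x \<partial>M)" if "A \<in> sets M" for A
  proof -
    have "ennreal (P A) = emeasure N A" using eN that by (simp add: mu_def)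
    also have "\<dots> = (\<integral>\<^sup>+x\<in>A. f x \<partial>M)" using that fm by (simp flip: fd add: emeasure_density)
    finally show ?thesis .
  qed
  have "(\<integral>\<^sup>+x. f x \<partial>M) = (\<integral>\<^sup>+x. f x * indicator (space M) x \<partial>M)"
    by (rule nn_integral_cong) simp
  also have "\<dots> = ennreal (P (space M))" using int_f[of "space M"] by simp
  finally have "(\<integral>\<^sup>+x. f x \<partial>M) = ennreal (P (space M))" .
  then have fin: "(\<integral>\<^sup>+x. f x \<partial>M) \<noteq> \<infinity>" by simp
  have aefin: "AE x in M. f x \<noteq> \<infinity>" by (rule nn_integral_PInf_AE[OF fm fin])
  define r where "r x = enn2real (f x)" for x
  have rm: "r \<in> borel_measurable M" unfolding r_def using fm by measurable
  have fr: "AE x in M. f x = ennreal (r x)" using aefin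
    by (rule AE_mp) (auto intro!: AE_I2 simp: r_def less_top)
  have r_int: "integrable M r"
  proof (rule integrableI_bounded[OF rm])
    have "(\<integral>\<^sup>+x. ennreal (norm (r x)) \<partial>M) = (\<integral>\<^sup>+x. f x \<partial>M)"
      using fr by (intro nn_integral_cong_AE) (auto simp: r_def)
    then show "(\<integral>\<^sup>+x. ennreal (norm (r x)) \<partial>M) < \<infinity>" using fin by (simp add: less_top)
  qed
  have PI: "P A = (\<integral>x. indicator A x * r x \<partial>M)" if A: "A \<in> sets M" for A
  proof -
    have i2: "integrable M (\<lambda>x. indicator A x * r x)"
      using integrable_mult_indicator[OF A r_int] by simp
    have "ennreal (P A) = (\<integral>\<^sup>+x. f x * indicator A x \<partial>M)" by (rule int_f[OF A])
    also have "\<dots> = (\<integral>\<^sup>+x. ennreal (indicator A x * r x) \<partial>M)"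
      using fr by (intro nn_integral_cong_AE) (rule AE_mp, auto intro!: AE_I2 simp: indicator_def)
    also have "\<dots> = ennreal (\<integral>x. indicator A x * r x \<partial>M)"
      by (rule nn_integral_eq_integral[OF i2]) (auto simp: r_def)
    finally have e1: "ennreal (P A) = ennreal (\<integral>x. indicator A x * r x \<partial>M)" .
    have "0 \<le> (\<integral>x. indicator A x * r x \<partial>M)"
      by (rule Bochner_Integration.integral_nonneg) (simp add: r_def)
    then show ?thesis using e1 P_nonneg[of A] by simp
  qed
  have least: "P A \<le> z" if "\<forall>B\<in>sets M. B \<subseteq> A \<longrightarrow> \<nu> B \<le> z" for A z
    unfolding P_def using that by (intro cSUP_least[OF ne]) auto
  show ?thesis using r_int by (intro exI[of _ r]) (auto simp flip: PI intro: P_upper least)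
qed



lemma sum_indicator_repr:
  fixes s :: "'a \<Rightarrow> real"
  assumes "finite (s ` S)" "x \<in> S"
  shows "(\<Sum>y\<in>s ` S. y * indicator (s -` {y} \<inter> S) x) = s x"
proof -
  have "(\<Sum>y\<in>s ` S. y * indicator (s -` {y} \<inter> S) x) = (\<Sum>y\<in>s ` S. if y = s x then y else 0)"
    using assms by (intro sum.cong) (auto simp: indicator_def)
  also have "\<dots> = s x" using assms by simp
  finally show ?thesis .
qed

lemma Lp_simple_repr:
  fixes lf :: "(real^'n::finite \<Rightarrow> real) \<Rightarrow> real"
  assumes \<Omega>: "\<Omega> \<in> lmeasurable" and p0: "0 < p"
    and add: "\<And>u v. u \<in> Lp \<Omega> p \<Longrightarrow> v \<in> Lp \<Omega> p \<Longrightarrow> lf (\<lambda>x. u x + v x) = lf u + lf v"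
    and hom: "\<And>u c. u \<in> Lp \<Omega> p \<Longrightarrow> lf (\<lambda>x. c * u x) = c * lf u"
    and ae: "\<And>u v. u \<in> Lp \<Omega> p \<Longrightarrow> v \<in> Lp \<Omega> p \<Longrightarrow> (AE x in lebesgue_on \<Omega>. u x = v x) \<Longrightarrow> lf u = lf v"
    and g: "integrable (lebesgue_on \<Omega>) g"
    and ind: "\<And>A. A \<in> sets (lebesgue_on \<Omega>) \<Longrightarrow> lf (indicator A) = (\<integral>x. indicator A x * g x \<partial>lebesgue_on \<Omega>)"
    and s: "simple_function (lebesgue_on \<Omega>) s"
  shows "lf s = (\<integral>x. s x * g x \<partial>lebesgue_on \<Omega>)"
proof -
  define M where "M = lebesgue_on \<Omega>"
  have sM: "space M = \<Omega>" by (simp add: M_def)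
  define F where "F = s ` space M"
  define A where "A y = s -` {y} \<inter> space M" for y
  have F: "finite F" using simple_functionD(1)[OF s] by (simp add: F_def M_def)
  have A: "A y \<in> sets M" for y using simple_functionD(2)[OF s] by (simp add: A_def M_def)
  have meas_sum: "(\<lambda>x. \<Sum>y\<in>G. c y * indicator (A y) x) \<in> borel_measurable M" for G and c :: "real \<Rightarrow> real"
  proof (rule borel_measurable_sum)
    fix y show "(\<lambda>x. c y * indicator (A y) x) \<in> borel_measurable M"
      using borel_measurable_indicator[OF A[of y]] by (rule borel_measurable_times[OF borel_measurable_const])
  qed
  have sumLp: "(\<lambda>x. \<Sum>y\<in>G. c y * indicator (A y) x) \<in> Lp \<Omega> p" if "finite G" for G and c :: "real \<Rightarrow> real"
  proof (rule bounded_in_Lp[OF \<Omega> _ _ p0])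
    show "(\<lambda>x. \<Sum>y\<in>G. c y * indicator (A y) x) \<in> borel_measurable (lebesgue_on \<Omega>)"
      using meas_sum by (simp add: M_def)
    fix x
    have "\<bar>\<Sum>y\<in>G. c y * indicator (A y) x\<bar> \<le> (\<Sum>y\<in>G. \<bar>c y * indicator (A y) x\<bar>)" by (rule sum_abs)
    also have "\<dots> \<le> (\<Sum>y\<in>G. \<bar>c y\<bar>)" by (intro sum_mono) (auto simp: indicator_def)
    finally show "\<bar>\<Sum>y\<in>G. c y * indicator (A y) x\<bar> \<le> (\<Sum>y\<in>G. \<bar>c y\<bar>)" .
  qed
  have indLp: "indicator (A y) \<in> Lp \<Omega> p" for y
    by (rule bounded_in_Lp[OF \<Omega> _ _ p0, where B=1]) (use A in \<open>auto simp: M_def indicator_def intro!: borel_measurable_indicator\<close>)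
  have ell_sum: "lf (\<lambda>x. \<Sum>y\<in>G. y * indicator (A y) x) = (\<Sum>y\<in>G. y * lf (indicator (A y)))" if "finite G" for G
    using that
  proof (induction G rule: finite_induct)
    case empty
    have "lf (\<lambda>x. 0 * indicator (A 0) x) = 0 * lf (indicator (A 0))" by (rule hom[OF indLp])
    then show ?case by simp
  next
    case (insert a G)
    have "lf (\<lambda>x. \<Sum>y\<in>insert a G. y * indicator (A y) x)
        = lf (\<lambda>x. a * indicator (A a) x + (\<Sum>y\<in>G. y * indicator (A y) x))"
      by (simp only: sum.insert[OF insert(1,2)])
    also have "\<dots> = lf (\<lambda>x. a * indicator (A a) x) + lf (\<lambda>x. \<Sum>y\<in>G. y * indicator (A y) x)"
      using add[OF sumLp[of "{a}" "\<lambda>_. a"] sumLp[OF insert(1), of "\<lambda>y. y"]] by (simp only: sum.empty sum.insert_if finite.intros empty_iff if_False add_0_right)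
    also have "\<dots> = a * lf (indicator (A a)) + (\<Sum>y\<in>G. y * lf (indicator (A y)))"
      using hom[OF indLp] insert.IH by simp
    finally show ?case using insert by simp
  qed
  have sLp: "s \<in> Lp \<Omega> p"
  proof (rule bounded_in_Lp[OF \<Omega> _ _ p0])
    show "s \<in> borel_measurable (lebesgue_on \<Omega>)" by (rule borel_measurable_simple_function[OF s])
    fix x assume "x \<in> \<Omega>"
    then have "s x \<in> F" by (simp add: F_def sM)
    then show "\<bar>s x\<bar> \<le> (\<Sum>y\<in>F. \<bar>y\<bar>)" using F by (intro member_le_sum) auto
  qed
  have rep: "s x = (\<Sum>y\<in>F. y * indicator (A y) x)" if "x \<in> space M" for x
    using sum_indicator_repr[of s "space M" x] F that by (simp add: F_def A_def)
  have "lf s = lf (\<lambda>x. \<Sum>y\<in>F. y * indicator (A y) x)"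
    by (rule ae[OF sLp sumLp[OF F]]) (use rep in \<open>auto simp: M_def intro!: AE_I2\<close>)
  also have "\<dots> = (\<Sum>y\<in>F. y * (\<integral>x. indicator (A y) x * g x \<partial>M))"
    using ell_sum[OF F] ind A by (simp add: M_def)
  also have "\<dots> = (\<Sum>y\<in>F. (\<integral>x. y * (indicator (A y) x * g x) \<partial>M))"
    by simp
  also have "\<dots> = (\<integral>x. (\<Sum>y\<in>F. y * (indicator (A y) x * g x)) \<partial>M)"
  proof -
    have "integrable M (\<lambda>x. y * (indicator (A y) x * g x))" for y
    proof -
      have "integrable M (\<lambda>x. indicator (A y) x *\<^sub>R g x)"
        using integrable_mult_indicator[OF A, of g] g by (simp add: M_def)
      then show ?thesis by simp
    qed
    then show ?thesis
      using Bochner_Integration.integral_sum[where I=F and M=M and f="\<lambda>y x. y * (indicator (A y) x * g x)"] by simp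
  qed
  also have "\<dots> = (\<integral>x. s x * g x \<partial>M)"
    by (rule Bochner_Integration.integral_cong) (auto simp: rep sum_distrib_right mult.assoc)
  finally show ?thesis by (simp add: M_def)
qed



lemma Lp_approx_repr:
  fixes lf :: "(real^'n::finite \<Rightarrow> real) \<Rightarrow> real"
  assumes \<Omega>: "\<Omega> \<in> lmeasurable" and p0: "0 < p"
    and add: "\<And>u v. u \<in> Lp \<Omega> p \<Longrightarrow> v \<in> Lp \<Omega> p \<Longrightarrow> lf (\<lambda>x. u x + v x) = lf u + lf v"
    and bnd: "\<And>u. u \<in> Lp \<Omega> p \<Longrightarrow> \<bar>lf u\<bar> \<le> C * Lp_norm \<Omega> p u"
    and simp_rep: "\<And>s. simple_function (lebesgue_on \<Omega>) s \<Longrightarrow> lf s = (\<integral>x. s x * g x \<partial>lebesgue_on \<Omega>)"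
    and v: "v \<in> Lp \<Omega> p" and gm: "g \<in> borel_measurable (lebesgue_on \<Omega>)"
    and dom: "integrable (lebesgue_on \<Omega>) (\<lambda>x. \<bar>v x\<bar> * \<bar>g x\<bar>)"
  shows "lf v = (\<integral>x. v x * g x \<partial>lebesgue_on \<Omega>)"
proof -
  define M where "M = lebesgue_on \<Omega>"
  have sM: "space M = \<Omega>" by (simp add: M_def)
  have vm: "v \<in> borel_measurable M" and vi: "integrable M (\<lambda>x. \<bar>v x\<bar> powr p)"
    using v by (auto simp: Lp_def M_def)
  obtain s where s: "\<And>i. simple_function M (s i)"
    and slim: "\<And>x. x \<in> space M \<Longrightarrow> (\<lambda>i. s i x) \<longlonglongrightarrow> v x"
    and sb: "\<And>i x. x \<in> space M \<Longrightarrow> \<bar>s i x\<bar> \<le> 2 * \<bar>v x\<bar>"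
    using borel_measurable_implies_sequence_metric[OF vm, of 0] by (auto simp: dist_real_def) blast
  have sm: "s i \<in> borel_measurable M" for i by (rule borel_measurable_simple_function[OF s])
  have sLp: "s i \<in> Lp \<Omega> p" for i
    by (rule dom_in_Lp[OF v _ _ p0, where c=2]) (use sm sb in \<open>auto simp: M_def\<close>)
  define w where "w i x = v x - s i x" for i x
  have wm: "w i \<in> borel_measurable M" for i unfolding w_def using vm sm by measurable
  have wb: "\<bar>w i x\<bar> \<le> 3 * \<bar>v x\<bar>" if "x \<in> space M" for i x
    using sb[OF that, of i] by (simp add: w_def)
  have wLp: "w i \<in> Lp \<Omega> p" for i
    by (rule dom_in_Lp[OF v _ _ p0, where c=3]) (use wm wb in \<open>auto simp: M_def\<close>)
  have split: "lf v = lf (w i) + lf (s i)" for i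
  proof -
    have "v = (\<lambda>x. w i x + s i x)" by (simp add: w_def)
    then show ?thesis using add[OF wLp sLp] by metis
  qed
  have int0: "(\<lambda>i. \<integral>x. \<bar>w i x\<bar> powr p \<partial>M) \<longlonglongrightarrow> (\<integral>x. 0 \<partial>M)"
  proof (rule integral_dominated_convergence[where w="\<lambda>x. 3 powr p * \<bar>v x\<bar> powr p"])
    show "(\<lambda>x. 0::real) \<in> borel_measurable M" by simp
    show "(\<lambda>x. \<bar>w i x\<bar> powr p) \<in> borel_measurable M" for i using wm by measurable
    show "integrable M (\<lambda>x. 3 powr p * \<bar>v x\<bar> powr p)" using vi by simp
    show "AE x in M. (\<lambda>i. \<bar>w i x\<bar> powr p) \<longlonglongrightarrow> 0"
    proof (rule AE_I2)
      fix x assume x: "x \<in> space M"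
      have "(\<lambda>i. \<bar>w i x\<bar>) \<longlonglongrightarrow> \<bar>v x - v x\<bar>"
        unfolding w_def by (intro tendsto_rabs tendsto_diff tendsto_const slim[OF x])
      then have "(\<lambda>i. \<bar>w i x\<bar>) \<longlonglongrightarrow> 0" by simp
      then show "(\<lambda>i. \<bar>w i x\<bar> powr p) \<longlonglongrightarrow> 0"
        by (rule tendsto_zero_powrI[OF _ tendsto_const]) (use p0 in auto)
    qed
    show "AE x in M. norm (\<bar>w i x\<bar> powr p) \<le> 3 powr p * \<bar>v x\<bar> powr p" for i
    proof (rule AE_I2)
      fix x assume x: "x \<in> space M"
      have "\<bar>w i x\<bar> powr p \<le> (3 * \<bar>v x\<bar>) powr p" using wb[OF x] p0 by (simp add: powr_mono2)
      then show "norm (\<bar>w i x\<bar> powr p) \<le> 3 powr p * \<bar>v x\<bar> powr p" by (simp add: powr_mult)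
    qed
  qed
  have norm0: "(\<lambda>i. Lp_norm \<Omega> p (w i)) \<longlonglongrightarrow> 0"
    unfolding Lp_norm_def M_def[symmetric]
  proof (rule tendsto_zero_powrI[OF _ tendsto_const])
    show "(\<lambda>i. \<integral>x. \<bar>w i x\<bar> powr p \<partial>M) \<longlonglongrightarrow> 0" using int0 by simp
    show "\<forall>\<^sub>F i in sequentially. 0 \<le> (\<integral>x. \<bar>w i x\<bar> powr p \<partial>M)" by simp
    show "0 < 1 / p" using p0 by simp
  qed
  have "(\<lambda>i. lf (w i)) \<longlonglongrightarrow> 0"
  proof (rule Lim_null_comparison)
    show "\<forall>\<^sub>F i in sequentially. norm (lf (w i)) \<le> C * Lp_norm \<Omega> p (w i)"
      using bnd[OF wLp] by simp
    show "(\<lambda>i. C * Lp_norm \<Omega> p (w i)) \<longlonglongrightarrow> 0"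
      using tendsto_mult[OF tendsto_const norm0, of C] by simp
  qed
  then have "(\<lambda>i. lf v - lf (w i)) \<longlonglongrightarrow> lf v - 0" by (intro tendsto_diff tendsto_const)
  moreover have "(\<lambda>i. lf v - lf (w i)) = (\<lambda>i. lf (s i))" by (rule ext) (metis split add_diff_cancel_left')
  ultimately have L1: "(\<lambda>i. lf (s i)) \<longlonglongrightarrow> lf v" by simp
  have L2: "(\<lambda>i. \<integral>x. s i x * g x \<partial>M) \<longlonglongrightarrow> (\<integral>x. v x * g x \<partial>M)"
  proof (rule integral_dominated_convergence[where w="\<lambda>x. 2 * (\<bar>v x\<bar> * \<bar>g x\<bar>)"])
    have gm: "g \<in> borel_measurable M" using gm by (simp add: M_def)
    show "(\<lambda>x. v x * g x) \<in> borel_measurable M" using vm gm by measurable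
    show "(\<lambda>x. s i x * g x) \<in> borel_measurable M" for i using sm gm by measurable
    show "integrable M (\<lambda>x. 2 * (\<bar>v x\<bar> * \<bar>g x\<bar>))" using dom by (simp add: M_def)
    show "AE x in M. (\<lambda>i. s i x * g x) \<longlonglongrightarrow> v x * g x"
      by (rule AE_I2) (intro tendsto_mult tendsto_const slim)
    show "AE x in M. norm (s i x * g x) \<le> 2 * (\<bar>v x\<bar> * \<bar>g x\<bar>)" for i
    proof (rule AE_I2)
      fix x assume x: "x \<in> space M"
      show "norm (s i x * g x) \<le> 2 * (\<bar>v x\<bar> * \<bar>g x\<bar>)"
        using mult_right_mono[OF sb[OF x, of i] abs_ge_zero[of "g x"]] by (simp add: abs_mult mult.assoc)
    qed
  qed
  have "(\<lambda>i. lf (s i)) \<longlonglongrightarrow> (\<integral>x. v x * g x \<partial>M)"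
    using L2 simp_rep[OF s[unfolded M_def]] by (simp add: M_def)
  then show ?thesis using L1 LIMSEQ_unique by (metis M_def)
qed



lemma Lp_representation:
  fixes lf :: "(real^'n::finite \<Rightarrow> real) \<Rightarrow> real"
  assumes \<Omega>: "\<Omega> \<in> lmeasurable" and p: "1 < p"
    and add: "\<And>u v. u \<in> Lp \<Omega> p \<Longrightarrow> v \<in> Lp \<Omega> p \<Longrightarrow> lf (\<lambda>x. u x + v x) = lf u + lf v"
    and hom: "\<And>u c. u \<in> Lp \<Omega> p \<Longrightarrow> lf (\<lambda>x. c * u x) = c * lf u"
    and ae: "\<And>u v. u \<in> Lp \<Omega> p \<Longrightarrow> v \<in> Lp \<Omega> p \<Longrightarrow> (AE x in lebesgue_on \<Omega>. u x = v x) \<Longrightarrow> lf u = lf v"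
    and bnd: "\<And>u. u \<in> Lp \<Omega> p \<Longrightarrow> \<bar>lf u\<bar> \<le> C * Lp_norm \<Omega> p u"
  shows "\<exists>g \<in> Lp \<Omega> (p/(p-1)). \<forall>u \<in> Lp \<Omega> p. lf u = (\<integral>x. u x * g x \<partial>lebesgue_on \<Omega>)"
proof -
  define M where "M = lebesgue_on \<Omega>"
  interpret finite_measure M unfolding M_def by (rule finite_measure_lebesgue_on[OF \<Omega>])
  have sM: "space M = \<Omega>" by (simp add: M_def)
  have p0: "0 < p" using p by simp
  define C0 where "C0 = max C 0"
  have C0: "0 \<le> C0" by (simp add: C0_def)
  have bnd0: "\<bar>lf u\<bar> \<le> C0 * Lp_norm \<Omega> p u" if "u \<in> Lp \<Omega> p" for u
  proof -
    have "0 \<le> Lp_norm \<Omega> p u" by (simp add: Lp_norm_def)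
    then have "C * Lp_norm \<Omega> p u \<le> C0 * Lp_norm \<Omega> p u" by (intro mult_right_mono) (auto simp: C0_def)
    then show ?thesis using bnd[OF that] by linarith
  qed
  have ind_Lp: "indicator A \<in> Lp \<Omega> p" if "A \<in> sets M" for A
    by (rule bounded_in_Lp[OF \<Omega> _ _ p0, where B=1]) (use that in \<open>auto simp: M_def indicator_def intro!: borel_measurable_indicator\<close>)
  have ind_norm: "Lp_norm \<Omega> p (indicator A) = measure M A powr (1/p)" if "A \<in> sets M" for A
  proof -
    have "(\<lambda>x. \<bar>indicator A x :: real\<bar> powr p) = indicator A" using p0 by (auto simp: indicator_def fun_eq_iff)
    moreover have "A \<inter> space M = A" using sets.sets_into_space[OF that] by auto
    ultimately show ?thesis unfolding Lp_norm_def M_def[symmetric] by simp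
  qed
  define nu where "nu A = lf (indicator A)" for A
  have nu_add: "nu (A \<union> B) = nu A + nu B" if "A \<in> sets M" "B \<in> sets M" "A \<inter> B = {}" for A B
  proof -
    have "indicator (A \<union> B) = (\<lambda>x. indicator A x + indicator B x :: real)"
      using that by (auto simp: indicator_def fun_eq_iff)
    then show ?thesis unfolding nu_def using add[OF ind_Lp[OF that(1)] ind_Lp[OF that(2)]] by simp
  qed
  have nu_bnd: "\<bar>nu A\<bar> \<le> C0 * measure M A powr (1/p)" if "A \<in> sets M" for A
    using bnd0[OF ind_Lp[OF that]] ind_norm[OF that] by (simp add: nu_def)
  have e: "0 < 1/p" using p0 by simp
  obtain r1 where r1i: "integrable M r1"
    and r1u: "\<And>A B. A \<in> sets M \<Longrightarrow> B \<in> sets M \<Longrightarrow> B \<subseteq> A \<Longrightarrow> nu B \<le> (\<integral>x. indicator A x * r1 x \<partial>M)"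
    and r1l: "\<And>A z. A \<in> sets M \<Longrightarrow> (\<forall>B\<in>sets M. B \<subseteq> A \<longrightarrow> nu B \<le> z) \<Longrightarrow> (\<integral>x. indicator A x * r1 x \<partial>M) \<le> z"
  proof -
    have "\<exists>r. integrable M r \<and> (\<forall>A\<in>sets M. \<forall>B\<in>sets M. B \<subseteq> A \<longrightarrow> nu B \<le> (\<integral>x. indicator A x * r x \<partial>M)) \<and>
       (\<forall>A\<in>sets M. \<forall>z. (\<forall>B\<in>sets M. B \<subseteq> A \<longrightarrow> nu B \<le> z) \<longrightarrow> (\<integral>x. indicator A x * r x \<partial>M) \<le> z)"
    proof (rule pos_part_density[OF nu_add _ e C0])
      fix A assume "A \<in> sets M" then show "nu A \<le> C0 * measure M A powr (1/p)" using abs_le_D1[OF nu_bnd[OF \<open>A \<in> sets M\<close>]] by simp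
    qed
    then obtain r where r: "integrable M r" "\<forall>A\<in>sets M. \<forall>B\<in>sets M. B \<subseteq> A \<longrightarrow> nu B \<le> (\<integral>x. indicator A x * r x \<partial>M)"
       "\<forall>A\<in>sets M. \<forall>z. (\<forall>B\<in>sets M. B \<subseteq> A \<longrightarrow> nu B \<le> z) \<longrightarrow> (\<integral>x. indicator A x * r x \<partial>M) \<le> z"
      by (elim exE conjE) (rule that)
    show ?thesis by (rule that[OF r(1)]) (use r(2,3) in \<open>simp_all\<close>)
  qed
  obtain r2 where r2i: "integrable M r2"
    and r2u: "\<And>A B. A \<in> sets M \<Longrightarrow> B \<in> sets M \<Longrightarrow> B \<subseteq> A \<Longrightarrow> - nu B \<le> (\<integral>x. indicator A x * r2 x \<partial>M)"
    and r2l: "\<And>A z. A \<in> sets M \<Longrightarrow> (\<forall>B\<in>sets M. B \<subseteq> A \<longrightarrow> - nu B \<le> z) \<Longrightarrow> (\<integral>x. indicator A x * r2 x \<partial>M) \<le> z"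
  proof -
    have "\<exists>r. integrable M r \<and> (\<forall>A\<in>sets M. \<forall>B\<in>sets M. B \<subseteq> A \<longrightarrow> - nu B \<le> (\<integral>x. indicator A x * r x \<partial>M)) \<and>
       (\<forall>A\<in>sets M. \<forall>z. (\<forall>B\<in>sets M. B \<subseteq> A \<longrightarrow> - nu B \<le> z) \<longrightarrow> (\<integral>x. indicator A x * r x \<partial>M) \<le> z)"
    proof (rule pos_part_density[where \<nu>="\<lambda>A. - nu A", OF _ _ e C0])
      fix A B assume "A \<in> sets M" "B \<in> sets M" "A \<inter> B = {}"
      then show "- nu (A \<union> B) = - nu A + - nu B" using nu_add by simp
    next
      fix A assume "A \<in> sets M" then show "- nu A \<le> C0 * measure M A powr (1/p)" using abs_le_D2[OF nu_bnd[OF \<open>A \<in> sets M\<close>]] by simp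
    qed
    then obtain r where r: "integrable M r" "\<forall>A\<in>sets M. \<forall>B\<in>sets M. B \<subseteq> A \<longrightarrow> - nu B \<le> (\<integral>x. indicator A x * r x \<partial>M)"
       "\<forall>A\<in>sets M. \<forall>z. (\<forall>B\<in>sets M. B \<subseteq> A \<longrightarrow> - nu B \<le> z) \<longrightarrow> (\<integral>x. indicator A x * r x \<partial>M) \<le> z"
      by (elim exE conjE) (rule that)
    show ?thesis by (rule that[OF r(1)]) (use r(2,3) in \<open>simp_all\<close>)
  qed
  define I1 where "I1 A = (\<integral>x. indicator A x * r1 x \<partial>M)" for A
  define I2 where "I2 A = (\<integral>x. indicator A x * r2 x \<partial>M)" for A
  define g where "g x = r1 x - r2 x" for x
  have gi: "integrable M g" unfolding g_def using r1i r2i by (rule Bochner_Integration.integrable_diff)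
  have gm: "g \<in> borel_measurable M" using borel_measurable_integrable[OF gi] .
  have nu_eq: "nu A = I1 A - I2 A" if A: "A \<in> sets M" for A
  proof -
    have split: "nu A = nu B + nu (A - B)" if "B \<in> sets M" "B \<subseteq> A" for B
    proof -
      have AB: "B \<union> (A - B) = A" using that by auto
      have "A - B \<in> sets M" using that A by auto
      moreover have "B \<inter> (A - B) = {}" by blast
      ultimately have "nu (B \<union> (A - B)) = nu B + nu (A - B)" using nu_add[of B "A - B"] that by simp
      then show ?thesis unfolding AB .
    qed
    have "I2 A \<le> I1 A - nu A" unfolding I2_def
    proof (rule r2l[OF A], intro ballI impI)
      fix B assume B: "B \<in> sets M" "B \<subseteq> A"
      moreover have "nu (A - B) \<le> I1 A" unfolding I1_def using r1u[OF A, of "A - B"] A B by auto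
      ultimately show "- nu B \<le> I1 A - nu A" using split[OF B] by linarith
    qed
    moreover have "I1 A \<le> I2 A + nu A" unfolding I1_def
    proof (rule r1l[OF A], intro ballI impI)
      fix B assume B: "B \<in> sets M" "B \<subseteq> A"
      moreover have "- nu (A - B) \<le> I2 A" unfolding I2_def using r2u[OF A, of "A - B"] A B by auto
      ultimately show "nu B \<le> I2 A + nu A" using split[OF B] by linarith
    qed
    ultimately show ?thesis by linarith
  qed
  have ind_rep: "lf (indicator A) = (\<integral>x. indicator A x * g x \<partial>M)" if A: "A \<in> sets M" for A
  proof -
    have i1: "integrable M (\<lambda>x. indicator A x * r1 x)" using integrable_mult_indicator[OF A r1i] by simp
    have i2: "integrable M (\<lambda>x. indicator A x * r2 x)" using integrable_mult_indicator[OF A r2i] by simp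
    have "(\<integral>x. indicator A x * g x \<partial>M) = (\<integral>x. indicator A x * r1 x - indicator A x * r2 x \<partial>M)"
      by (simp add: g_def right_diff_distrib)
    also have "\<dots> = I1 A - I2 A" unfolding I1_def I2_def using i1 i2 by simp
    finally show ?thesis using nu_eq[OF A] by (simp add: nu_def)
  qed
  have simp_rep: "lf s = (\<integral>x. s x * g x \<partial>lebesgue_on \<Omega>)" if "simple_function (lebesgue_on \<Omega>) s" for s
  proof -
    note X = Lp_simple_repr[where lf=lf and g=g and s=s and \<Omega>=\<Omega> and p=p]
    have gi': "integrable (lebesgue_on \<Omega>) g" using gi by (simp add: M_def)
    have ir: "\<And>A. A \<in> sets (lebesgue_on \<Omega>) \<Longrightarrow> lf (indicator A) = (\<integral>x. indicator A x * g x \<partial>lebesgue_on \<Omega>)"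
      using ind_rep by (simp add: M_def)
    show ?thesis by (rule X[OF \<Omega> p0 add hom ae gi' ir that])
  qed
  have bdd_rep: "lf v = (\<integral>x. v x * g x \<partial>M)" if vm: "v \<in> borel_measurable M" and vb: "\<And>x. \<bar>v x\<bar> \<le> B" for v B
  proof -
    have vLp: "v \<in> Lp \<Omega> p" by (rule bounded_in_Lp[OF \<Omega> _ _ p0]) (use vm vb in \<open>auto simp: M_def\<close>)
    have dom: "integrable M (\<lambda>x. \<bar>v x\<bar> * \<bar>g x\<bar>)"
    proof (rule Bochner_Integration.integrable_bound[where f="\<lambda>x. B * \<bar>g x\<bar>"])
      show "integrable M (\<lambda>x. B * \<bar>g x\<bar>)" using gi by simp
      show "(\<lambda>x. \<bar>v x\<bar> * \<bar>g x\<bar>) \<in> borel_measurable M" using vm gm by measurable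
      show "AE x in M. norm (\<bar>v x\<bar> * \<bar>g x\<bar>) \<le> norm (B * \<bar>g x\<bar>)"
      proof (rule AE_I2)
        fix x
        have "\<bar>v x\<bar> * \<bar>g x\<bar> \<le> B * \<bar>g x\<bar>" using vb[of x] by (intro mult_right_mono) auto
        moreover have "0 \<le> B" using vb[of x] by linarith
        ultimately show "norm (\<bar>v x\<bar> * \<bar>g x\<bar>) \<le> norm (B * \<bar>g x\<bar>)" by (simp add: abs_mult)
      qed
    qed
    have gm': "g \<in> borel_measurable (lebesgue_on \<Omega>)" using gm by (simp add: M_def)
    have dom': "integrable (lebesgue_on \<Omega>) (\<lambda>x. \<bar>v x\<bar> * \<bar>g x\<bar>)" using dom by (simp add: M_def)
    note X = Lp_approx_repr[where lf=lf and g=g and v=v and \<Omega>=\<Omega> and p=p and C=C0]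
    show ?thesis unfolding M_def by (rule X[OF \<Omega> p0 add bnd0 simp_rep vLp gm' dom'])
  qed
  define q where "q = p/(p-1)"
  have q1: "1 < q" and qp: "(q - 1) * p = q" and q_inv: "1/p + 1/q = 1"
    using p by (auto simp: q_def field_simps)
  define gN where "gN N x = (if \<bar>g x\<bar> \<le> real N then g x else 0)" for N :: nat and x
  define vN where "vN N x = sgn (gN N x) * \<bar>gN N x\<bar> powr (q - 1)" for N x
  have gNm: "gN N \<in> borel_measurable M" for N unfolding gN_def using gm by measurable
  have vNm: "vN N \<in> borel_measurable M" for N unfolding vN_def using gNm by measurable
  have gNb: "\<bar>gN N x\<bar> \<le> real N" for N x by (simp add: gN_def)
  have vNabs: "\<bar>vN N x\<bar> = \<bar>gN N x\<bar> powr (q - 1)" for N x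
    by (cases "gN N x = 0") (auto simp: vN_def abs_mult)
  have vNb: "\<bar>vN N x\<bar> \<le> real N powr (q - 1)" for N x
    unfolding vNabs using gNb[of N x] q1 by (intro powr_mono2) auto
  have vNg: "vN N x * g x = \<bar>gN N x\<bar> powr q" for N x
  proof (cases "\<bar>g x\<bar> \<le> real N \<and> g x \<noteq> 0")
    case True
    then have e1: "gN N x = g x" by (simp add: gN_def)
    have sg: "sgn (g x) * g x = \<bar>g x\<bar>" by (simp add: sgn_if)
    have pos: "0 < \<bar>g x\<bar>" using True by simp
    have "vN N x * g x = \<bar>g x\<bar> powr (q - 1) * (sgn (g x) * g x)" by (simp add: vN_def e1 mult_ac)
    also have "\<dots> = \<bar>g x\<bar> powr (q - 1) * \<bar>g x\<bar> powr 1" using sg pos by simp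
    also have "\<dots> = \<bar>g x\<bar> powr q" using powr_add[of "\<bar>g x\<bar>" "q-1" 1] by simp
    finally show ?thesis using e1 by simp
  next
    case False
    then have "gN N x = 0 \<or> g x = 0" by (auto simp: gN_def)
    then show ?thesis by (auto simp: vN_def gN_def)
  qed
  have vNpow: "\<bar>vN N x\<bar> powr p = \<bar>gN N x\<bar> powr q" for N x
    unfolding vNabs using qp by (simp add: powr_powr)
  have vNLp: "vN N \<in> Lp \<Omega> p" for N
    by (rule bounded_in_Lp[OF \<Omega> _ _ p0, where B="real N powr (q - 1)"]) (use vNm vNb in \<open>auto simp: M_def\<close>)
  define IN where "IN N = (\<integral>x. \<bar>gN N x\<bar> powr q \<partial>M)" for N
  have INnn: "0 \<le> IN N" for N by (simp add: IN_def)
  have lfvN: "lf (vN N) = IN N" for N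
    using bdd_rep[OF vNm vNb] vNg by (simp add: IN_def)
  have normvN: "Lp_norm \<Omega> p (vN N) = IN N powr (1/p)" for N
    unfolding Lp_norm_def M_def[symmetric] IN_def using vNpow by simp
  have INb: "IN N \<le> C0 powr q" for N
  proof (cases "IN N = 0")
    case True then show ?thesis by simp
  next
    case False
    then have pos: "0 < IN N" using INnn[of N] by simp
    have le: "IN N \<le> C0 * IN N powr (1/p)" using bnd0[OF vNLp, of N] lfvN[of N] normvN[of N] by simp
    have eq: "IN N = IN N powr (1/q) * IN N powr (1/p)" using pos q_inv by (simp add: powr_add[symmetric] add.commute)
    have "IN N powr (1/q) * IN N powr (1/p) \<le> C0 * IN N powr (1/p)" using le eq by simp
    then have l2: "IN N powr (1/q) \<le> C0" using pos by (simp add: mult_le_cancel_right)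
    have "(IN N powr (1/q)) powr q \<le> C0 powr q" using q1 l2 by (intro powr_mono2) auto
    then show ?thesis using pos q1 by (simp add: powr_powr)
  qed
  have gNint: "integrable M (\<lambda>x. \<bar>gN N x\<bar> powr q)" for N
  proof (rule Bochner_Integration.integrable_bound[where f="\<lambda>x. real N powr q"])
    show "integrable M (\<lambda>x. real N powr q)" by simp
    show "(\<lambda>x. \<bar>gN N x\<bar> powr q) \<in> borel_measurable M" using gNm by measurable
    show "AE x in M. norm (\<bar>gN N x\<bar> powr q) \<le> norm (real N powr q)"
      by (rule AE_I2) (use gNb q1 in \<open>auto intro!: powr_mono2\<close>)
  qed
  have gNmono: "\<bar>gN N x\<bar> \<le> \<bar>gN N' x\<bar>" if "N \<le> N'" for N N' x
    using that by (auto simp: gN_def)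
  have inc: "incseq IN"
  proof (rule incseq_SucI)
    fix N show "IN N \<le> IN (Suc N)" unfolding IN_def
      by (rule integral_mono[OF gNint gNint]) (use gNmono q1 in \<open>auto intro!: powr_mono2\<close>)
  qed
  have "integrable M (\<lambda>x. \<bar>g x\<bar> powr q)"
  proof (rule integrable_monotone_convergence[where f="\<lambda>N x. \<bar>gN N x\<bar> powr q" and x="SUP N. IN N"])
    show "integrable M (\<lambda>x. \<bar>gN N x\<bar> powr q)" for N by (rule gNint)
    show "AE x in M. mono (\<lambda>N. \<bar>gN N x\<bar> powr q)"
      by (rule AE_I2) (use gNmono q1 in \<open>auto intro!: monoI powr_mono2\<close>)
    show "AE x in M. (\<lambda>N. \<bar>gN N x\<bar> powr q) \<longlonglongrightarrow> \<bar>g x\<bar> powr q"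
    proof (rule AE_I2, rule tendsto_eventually)
      fix x
      obtain N0 :: nat where "\<bar>g x\<bar> \<le> real N0" using real_arch_simple by blast
      then show "\<forall>\<^sub>F N in sequentially. \<bar>gN N x\<bar> powr q = \<bar>g x\<bar> powr q"
        unfolding eventually_sequentially by (intro exI[of _ N0]) (auto simp: gN_def)
    qed
    show "(\<lambda>N. \<integral>x. \<bar>gN N x\<bar> powr q \<partial>M) \<longlonglongrightarrow> (SUP N. IN N)"
      unfolding IN_def[symmetric]
      by (rule LIMSEQ_incseq_SUP[OF _ inc]) (use INb in \<open>auto intro!: bdd_aboveI2[where M="C0 powr q"]\<close>)
    show "(\<lambda>x. \<bar>g x\<bar> powr q) \<in> borel_measurable M" using gm by measurable
  qed
  then have gLq: "g \<in> Lp \<Omega> (p/(p-1))" using gm by (simp add: Lp_def q_def M_def)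
  have "lf u = (\<integral>x. u x * g x \<partial>lebesgue_on \<Omega>)" if u: "u \<in> Lp \<Omega> p" for u
  proof -
    have "integrable (lebesgue_on \<Omega>) (\<lambda>x. u x * g x)" by (rule Lp_mult_integrable[OF p u gLq])
    then have "integrable (lebesgue_on \<Omega>) (\<lambda>x. norm (u x * g x))" by (rule integrable_norm)
    then have dom': "integrable (lebesgue_on \<Omega>) (\<lambda>x. \<bar>u x\<bar> * \<bar>g x\<bar>)" by (simp add: abs_mult)
    have gm': "g \<in> borel_measurable (lebesgue_on \<Omega>)" using gm by (simp add: M_def)
    note X = Lp_approx_repr[where lf=lf and g=g and v=u and \<Omega>=\<Omega> and p=p and C=C0]
    show ?thesis by (rule X[OF \<Omega> p0 add bnd0 simp_rep u gm' dom'])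
  qed
  then show ?thesis using gLq by blast
qed



lemma pd_zero_open:
  assumes U: "open U" and f0: "\<And>y. y \<in> U \<Longrightarrow> f y = 0" and y: "y \<in> U"
  shows "pd j f y = 0"
proof -
  have "((\<lambda>_. 0::real) has_derivative (\<lambda>h. 0)) (at y)" by (rule has_derivative_const)
  then have "(f has_derivative (\<lambda>h. 0)) (at y)"
    by (rule has_derivative_transform_within_open[OF _ U y]) (use f0 in auto)
  then have "(\<lambda>h. 0) = frechet_derivative f (at y)" by (rule frechet_derivative_at)
  then show ?thesis unfolding pd_def by (metis)
qed

lemma pd_const0: "pd j (\<lambda>y. 0) = (\<lambda>y. 0)"
  using pd_zero_open[of UNIV "\<lambda>y. 0"] by auto

lemma div2_bounded:
  fixes \<psi> :: "real^'n::finite \<Rightarrow> real^'n^'n"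
  assumes \<psi>: "\<psi> \<in> C2c_sym \<Omega>"
  shows "continuous_on \<Omega> (div2 \<psi>)" and "\<exists>B. \<forall>x. \<bar>div2 \<psi> x\<bar> \<le> B"
proof -
  have C2: "C2_on \<Omega> (\<lambda>x. \<psi> x $ i $ j)" for i j using \<psi> by (simp add: C2c_sym_def)
  have cij: "continuous_on \<Omega> (pd i (pd j (\<lambda>y. \<psi> y $ i $ j)))" for i j
    using C2[of i j] by (simp add: C2_on_def C1_on_def)
  show cont: "continuous_on \<Omega> (div2 \<psi>)"
    unfolding div2_def by (intro continuous_on_sum cij)
  define S where "S = closure {x. \<psi> x \<noteq> 0}"
  have S: "compact S" "S \<subseteq> \<Omega>" using \<psi> by (auto simp: C2c_sym_def S_def)
  have zero: "div2 \<psi> y = 0" if "y \<notin> S" for y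
  proof -
    have U: "open (- S)" unfolding S_def by (rule open_Compl) simp
    have z: "\<psi> z $ i $ j = 0" if "z \<in> - S" for z i j
    proof -
      have "z \<notin> {x. \<psi> x \<noteq> 0}" using that closure_subset[of "{x. \<psi> x \<noteq> 0}"] by (auto simp: S_def)
      then show ?thesis by simp
    qed
    have z1: "pd j (\<lambda>y. \<psi> y $ i $ j) z = 0" if "z \<in> - S" for z i j
      by (rule pd_zero_open[OF U _ that]) (use z in auto)
    have "pd i (pd j (\<lambda>y. \<psi> y $ i $ j)) y = 0" for i j
      by (rule pd_zero_open[OF U]) (use z1 that in auto)
    then show ?thesis by (simp add: div2_def)
  qed
  have "compact (div2 \<psi> ` S)"
    by (rule compact_continuous_image[OF continuous_on_subset[OF cont S(2)] S(1)])
  then obtain B where B: "\<And>x. x \<in> S \<Longrightarrow> norm (div2 \<psi> x) \<le> B"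
    using compact_imp_bounded bounded_iff by (metis imageI)
  have "\<bar>div2 \<psi> x\<bar> \<le> max B 0" for x
    using B[of x] zero[of x] by (cases "x \<in> S") auto
  then show "\<exists>B. \<forall>x. \<bar>div2 \<psi> x\<bar> \<le> B" by blast
qed

lemma div2_Lp:
  fixes \<psi> :: "real^'n::finite \<Rightarrow> real^'n^'n"
  assumes \<psi>: "\<psi> \<in> C2c_sym \<Omega>" and \<Omega>: "\<Omega> \<in> lmeasurable" and q: "0 < q"
  shows "div2 \<psi> \<in> Lp \<Omega> q"
proof -
  obtain B where B: "\<And>x. \<bar>div2 \<psi> x\<bar> \<le> B" using div2_bounded(2)[OF \<psi>] by blast
  have m: "div2 \<psi> \<in> borel_measurable (lebesgue_on \<Omega>)"
    using continuous_imp_measurable_on_sets_lebesgue[OF div2_bounded(1)[OF \<psi>]] \<Omega> by auto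
  show ?thesis by (rule bounded_in_Lp[OF \<Omega> m B q])
qed

lemma TGV_integral:
  fixes u h :: "'a::euclidean_space \<Rightarrow> real"
  assumes "\<Omega> \<in> sets lebesgue"
  shows "(\<integral>x\<in>\<Omega>. u x * h x \<partial>lebesgue) = (\<integral>x. u x * h x \<partial>lebesgue_on \<Omega>)"
  unfolding set_lebesgue_integral_def using integral_restrict_space[of \<Omega> lebesgue "\<lambda>x. u x * h x"] assms by simp

lemma TGV_ge:
  assumes "\<psi> \<in> C2c_sym \<Omega>" "lux_norm \<Omega> (conj_phi \<phi>) (\<lambda>x. norm (\<psi> x)) \<le> ereal \<alpha>1"
    "lux_norm \<Omega> (conj_phi \<phi>) (\<lambda>x. norm (div1 \<psi> x)) \<le> ereal \<alpha>2"
  shows "ereal (\<integral>x\<in>\<Omega>. u x * div2 \<psi> x \<partial>lebesgue) \<le> TGV \<Omega> \<phi> \<alpha>1 \<alpha>2 u"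
  unfolding TGV_def by (rule SUP_upper) (use assms in auto)

lemma lux_zero:
  assumes nn: "\<And>x s. x \<in> \<Omega> \<Longrightarrow> 0 \<le> s \<Longrightarrow> 0 \<le> \<phi> x s" and a: "0 < a"
  shows "lux_norm \<Omega> (conj_phi \<phi>) (\<lambda>x. 0) \<le> ereal a"
proof -
  have c0: "conj_phi \<phi> x 0 \<le> 0" if "x \<in> \<Omega>" for x
    unfolding conj_phi_def
  proof (rule SUP_least)
    fix s :: real assume "s \<in> {0..}"
    then have "0 \<le> \<phi> x s" using nn that by auto
    then show "ereal (s * 0) - \<phi> x s \<le> 0" by (cases "\<phi> x s") auto
  qed
  have "(\<integral>\<^sup>+x\<in>\<Omega>. e2ennreal (conj_phi \<phi> x (0 / a)) \<partial>lebesgue) = (\<integral>\<^sup>+x\<in>\<Omega>. 0 \<partial>lebesgue)"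
    by (rule nn_integral_cong) (auto simp: indicator_def e2ennreal_neg c0)
  then have "a \<in> {l. l > 0 \<and> (\<integral>\<^sup>+x\<in>\<Omega>. e2ennreal (conj_phi \<phi> x (0 / l)) \<partial>lebesgue) \<le> 1}"
    using a by simp
  then show ?thesis unfolding lux_norm_def by (rule Inf_lower[OF imageI])
qed

lemma zero_C2c: "(\<lambda>x. 0 :: real^'n::finite^'n) \<in> C2c_sym \<Omega>"
  by (simp add: C2c_sym_def C2_on_def C1_on_def pd_const0 transpose_def vec_eq_iff)

lemma div1_zero: "div1 (\<lambda>x. 0 :: real^'n::finite^'n) x = 0"
  by (simp add: div1_def pd_const0 vec_eq_iff)

lemma div2_zero: "div2 (\<lambda>x. 0 :: real^'n::finite^'n) x = 0"
  by (simp add: div2_def pd_const0)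

lemma TGV_nonneg:
  assumes nn: "\<And>x s. x \<in> \<Omega> \<Longrightarrow> 0 \<le> s \<Longrightarrow> 0 \<le> \<phi> x s" and a: "0 < \<alpha>1" "0 < \<alpha>2"
  shows "0 \<le> TGV \<Omega> \<phi> \<alpha>1 \<alpha>2 u"
proof -
  have "ereal (\<integral>x\<in>\<Omega>. u x * div2 (\<lambda>x. 0 :: real^'a::finite^'a) x \<partial>lebesgue) \<le> TGV \<Omega> \<phi> \<alpha>1 \<alpha>2 u"
    by (rule TGV_ge[OF zero_C2c]) (use lux_zero[OF nn a(1)] lux_zero[OF nn a(2)] in \<open>simp_all add: div1_zero\<close>)
  then show ?thesis by (simp add: div2_zero zero_ereal_def)
qed



lemma norm_liminf:
  fixes a b :: "nat \<Rightarrow> 'h::real_inner" and c d :: 'h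
  assumes inn: "(\<lambda>k. inner (c - d) (a k)) \<longlonglongrightarrow> inner (c - d) c" and bl: "b \<longlonglongrightarrow> d"
  shows "ereal (1/2 * norm (c - d)) \<le> liminf (\<lambda>k. ereal (1/2 * norm (a k - b k)))"
proof (rule ereal_le_epsilon2)
  fix e :: real assume e: "0 < e"
  define h where "h = c - d"
  have ev: "eventually (\<lambda>k. 1/2 * norm h - e \<le> 1/2 * norm (a k - b k)) sequentially"
  proof (cases "norm h = 0")
    case True
    have "1/2 * norm h - e \<le> 1/2 * norm (a k - b k)" for k
    proof -
      have "0 \<le> norm (a k - b k)" by simp
      then show ?thesis using True e by linarith
    qed
    then show ?thesis by (intro always_eventually allI)
  next
    case False
    then have hpos: "0 < norm h" by simp
    define dk where "dk k = (inner h c - inner h (a k)) + norm h * norm (b k - d)" for k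
    have nb: "(\<lambda>k. norm (b k - d)) \<longlonglongrightarrow> 0" using tendsto_norm[OF LIM_zero[OF bl]] by simp
    have "dk \<longlonglongrightarrow> (inner h c - inner h c) + norm h * 0"
      unfolding dk_def h_def by (intro tendsto_add tendsto_diff tendsto_mult tendsto_const inn[unfolded h_def] nb)
    then have "dk \<longlonglongrightarrow> 0" by simp
    moreover have "0 < 2 * e * norm h" using e hpos by simp
    ultimately have "eventually (\<lambda>k. dk k < 2 * e * norm h) sequentially"
      by (rule order_tendstoD(2))
    then show ?thesis
    proof (rule eventually_mono)
      fix k assume dk: "dk k < 2 * e * norm h"
      have hsum: "h = (a k - b k) + (c - a k) + (b k - d)" by (simp add: h_def algebra_simps)
      have "norm h ^ 2 = inner h h" by (rule power2_norm_eq_inner)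
      also have "\<dots> = inner h ((a k - b k) + (c - a k) + (b k - d))"
        using arg_cong[OF hsum, of "inner h"] .
      also have "\<dots> = inner h (a k - b k) + inner h (c - a k) + inner h (b k - d)"
        by (simp only: inner_add_right)
      also have "\<dots> \<le> norm h * norm (a k - b k) + (inner h c - inner h (a k)) + norm h * norm (b k - d)"
        using norm_cauchy_schwarz[of h "a k - b k"] norm_cauchy_schwarz[of h "b k - d"]
        by (simp add: inner_diff_right)
      finally have i1: "norm h ^ 2 \<le> norm h * norm (a k - b k) + dk k" by (simp add: dk_def)
      have "norm h * (norm h - 2 * e) = norm h ^ 2 - 2 * e * norm h" by (simp add: power2_eq_square algebra_simps)
      then have "norm h * (norm h - 2 * e) < norm h * norm (a k - b k)" using i1 dk by linarith
      then have "norm h - 2 * e < norm (a k - b k)" using hpos by (simp add: mult_less_cancel_left_pos)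
      then show "1/2 * norm h - e \<le> 1/2 * norm (a k - b k)" by simp
    qed
  qed
  have "ereal (1/2 * norm h - e) \<le> liminf (\<lambda>k. ereal (1/2 * norm (a k - b k)))"
    by (rule Liminf_bounded) (use ev in \<open>auto elim: eventually_mono\<close>)
  then have "ereal (1/2 * norm h - e) + ereal e \<le> liminf (\<lambda>k. ereal (1/2 * norm (a k - b k))) + ereal e"
    by (rule add_right_mono)
  then show "ereal (1/2 * norm (c - d)) \<le> liminf (\<lambda>k. ereal (1/2 * norm (a k - b k))) + ereal e"
    by (simp add: h_def)
qed

lemma TGV_liminf:
  fixes u :: "real^'n::finite \<Rightarrow> real"
  assumes \<Omega>: "\<Omega> \<in> lmeasurable" and p: "1 < p" and wc: "weak_conv_Lp \<Omega> p us u"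
  shows "TGV \<Omega> \<phi> \<alpha>1 \<alpha>2 u \<le> liminf (\<lambda>k. TGV \<Omega> \<phi> \<alpha>1 \<alpha>2 (us k))"
  unfolding TGV_def[of \<Omega> \<phi> \<alpha>1 \<alpha>2 u]
proof (rule SUP_least)
  fix \<psi> assume \<psi>: "\<psi> \<in> {\<psi> \<in> C2c_sym \<Omega>. lux_norm \<Omega> (conj_phi \<phi>) (\<lambda>x. norm (\<psi> x)) \<le> ereal \<alpha>1 \<and>
        lux_norm \<Omega> (conj_phi \<phi>) (\<lambda>x. norm (div1 \<psi> x)) \<le> ereal \<alpha>2}"
  have q: "0 < p/(p-1)" using p by simp
  have \<Omega>s: "\<Omega> \<in> sets lebesgue" using \<Omega> by (rule fmeasurableD)
  have psi0: "\<psi> \<in> C2c_sym \<Omega> \<and> lux_norm \<Omega> (conj_phi \<phi>) (\<lambda>x. norm (\<psi> x)) \<le> ereal \<alpha>1 \<and>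
    lux_norm \<Omega> (conj_phi \<phi>) (\<lambda>x. norm (div1 \<psi> x)) \<le> ereal \<alpha>2" using CollectD[OF \<psi>] .
  have psi: "\<psi> \<in> C2c_sym \<Omega>" "lux_norm \<Omega> (conj_phi \<phi>) (\<lambda>x. norm (\<psi> x)) \<le> ereal \<alpha>1"
    "lux_norm \<Omega> (conj_phi \<phi>) (\<lambda>x. norm (div1 \<psi> x)) \<le> ereal \<alpha>2" using psi0 by simp_all
  have d: "div2 \<psi> \<in> Lp \<Omega> (p/(p-1))" by (rule div2_Lp[OF psi(1) \<Omega> q])
  have lim: "(\<lambda>k. \<integral>x. us k x * div2 \<psi> x \<partial>lebesgue_on \<Omega>) \<longlonglongrightarrow> (\<integral>x. u x * div2 \<psi> x \<partial>lebesgue_on \<Omega>)"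
    using bspec[OF wc[unfolded weak_conv_Lp_def] d] .
  have le: "ereal (\<integral>x. us k x * div2 \<psi> x \<partial>lebesgue_on \<Omega>) \<le> TGV \<Omega> \<phi> \<alpha>1 \<alpha>2 (us k)" for k
    unfolding TGV_integral[OF \<Omega>s, symmetric] by (rule TGV_ge[OF psi])
  have "liminf (\<lambda>k. ereal (\<integral>x. us k x * div2 \<psi> x \<partial>lebesgue_on \<Omega>)) = ereal (\<integral>x. u x * div2 \<psi> x \<partial>lebesgue_on \<Omega>)"
    by (rule lim_imp_Liminf[OF trivial_limit_sequentially tendsto_ereal[OF lim]])
  moreover have "liminf (\<lambda>k. ereal (\<integral>x. us k x * div2 \<psi> x \<partial>lebesgue_on \<Omega>)) \<le> liminf (\<lambda>k. TGV \<Omega> \<phi> \<alpha>1 \<alpha>2 (us k))"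
    by (intro Liminf_mono always_eventually allI le)
  ultimately show "ereal (\<integral>x\<in>\<Omega>. u x * div2 \<psi> x \<partial>lebesgue) \<le> liminf (\<lambda>k. TGV \<Omega> \<phi> \<alpha>1 \<alpha>2 (us k))"
    unfolding TGV_integral[OF \<Omega>s] by simp
qed

lemma K_weak:
  fixes K :: "(real^'n::finite \<Rightarrow> real) \<Rightarrow> 'h::real_inner"
  assumes \<Omega>: "\<Omega> \<in> lmeasurable" and p: "1 < p" and K: "bounded_linear_Lp \<Omega> p K"
    and u: "u \<in> Lp \<Omega> p" and us: "\<And>k. us k \<in> Lp \<Omega> p" and wc: "weak_conv_Lp \<Omega> p us u"
  shows "(\<lambda>k. inner h (K (us k))) \<longlonglongrightarrow> inner h (K u)"
proof -
  have Kadd: "\<And>u v. u \<in> Lp \<Omega> p \<Longrightarrow> v \<in> Lp \<Omega> p \<Longrightarrow> K (\<lambda>x. u x + v x) = K u + K v"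
    and Khom: "\<And>u c. u \<in> Lp \<Omega> p \<Longrightarrow> K (\<lambda>x. c * u x) = c *\<^sub>R K u"
    and Kae: "\<And>u v. u \<in> Lp \<Omega> p \<Longrightarrow> v \<in> Lp \<Omega> p \<Longrightarrow> (AE x in lebesgue_on \<Omega>. u x = v x) \<Longrightarrow> K u = K v"
    using K unfolding bounded_linear_Lp_def by blast+
  obtain C where Kb: "\<And>u. u \<in> Lp \<Omega> p \<Longrightarrow> norm (K u) \<le> C * Lp_norm \<Omega> p u"
    using K unfolding bounded_linear_Lp_def by (elim conjE exE) (rule that, blast)
  define lf where "lf v = inner h (K v)" for v
  have "\<exists>g \<in> Lp \<Omega> (p/(p-1)). \<forall>u \<in> Lp \<Omega> p. lf u = (\<integral>x. u x * g x \<partial>lebesgue_on \<Omega>)"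
  proof (rule Lp_representation[OF \<Omega> p, where C="norm h * C"])
    fix u v assume "u \<in> Lp \<Omega> p" "v \<in> Lp \<Omega> p"
    then show "lf (\<lambda>x. u x + v x) = lf u + lf v" by (simp add: lf_def Kadd inner_add_right)
  next
    fix u c assume "u \<in> Lp \<Omega> p"
    then show "lf (\<lambda>x. c * u x) = c * lf u" by (simp add: lf_def Khom)
  next
    fix u v assume "u \<in> Lp \<Omega> p" "v \<in> Lp \<Omega> p" "AE x in lebesgue_on \<Omega>. u x = v x"
    then show "lf u = lf v" unfolding lf_def using Kae[of u v] by simp
  next
    fix u assume uL: "u \<in> Lp \<Omega> p"
    have "\<bar>lf u\<bar> \<le> norm h * norm (K u)" unfolding lf_def by (rule Cauchy_Schwarz_ineq2)
    also have "\<dots> \<le> norm h * (C * Lp_norm \<Omega> p u)" by (rule mult_left_mono[OF Kb[OF uL]]) simp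
    finally show "\<bar>lf u\<bar> \<le> norm h * C * Lp_norm \<Omega> p u" by (simp add: mult.assoc)
  qed
  then obtain g where g: "g \<in> Lp \<Omega> (p/(p-1))" and rep: "\<forall>u \<in> Lp \<Omega> p. lf u = (\<integral>x. u x * g x \<partial>lebesgue_on \<Omega>)"
    by (elim bexE)
  have wcg: "(\<lambda>k. \<integral>x. us k x * g x \<partial>lebesgue_on \<Omega>) \<longlonglongrightarrow> (\<integral>x. u x * g x \<partial>lebesgue_on \<Omega>)"
    using wc g by (simp add: weak_conv_Lp_def)
  have "(\<lambda>k. lf (us k)) = (\<lambda>k. \<integral>x. us k x * g x \<partial>lebesgue_on \<Omega>)" using rep us by simp
  moreover have "lf u = (\<integral>x. u x * g x \<partial>lebesgue_on \<Omega>)" using rep u by simp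
  ultimately show ?thesis using wcg by (simp add: lf_def)
qed



theorem theorem4p11:
  fixes \<Omega> :: "(real^'n::finite) set"
    and \<phi> :: "real^'n \<Rightarrow> real \<Rightarrow> ereal"
    and \<alpha>1 \<alpha>2 p :: real
    and K :: "(real^'n \<Rightarrow> real) \<Rightarrow> 'h::{real_inner, complete_space}"
    and fs :: "nat \<Rightarrow> 'h" and f :: 'h
  assumes "bounded \<Omega>" "connected \<Omega>" "open \<Omega>" "C1_boundary \<Omega>"
    and "Phi_w \<Omega> \<phi>" "A0 \<Omega> \<phi>"
    and "\<alpha>1 > 0" "\<alpha>2 > 0"
    and "1 < p" "(real CARD('n) - 1) * p \<le> real CARD('n)"
    and "bounded_linear_Lp \<Omega> p K" "injective_on_affine \<Omega> K"
    and "fs \<longlonglongrightarrow> f"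
  shows "Gamma_conv_weak_Lp \<Omega> p
           (\<lambda>k u. ereal (1/2 * norm (K u - fs k)) + TGV \<Omega> \<phi> \<alpha>1 \<alpha>2 u)
           (\<lambda>u. ereal (1/2 * norm (K u - f)) + TGV \<Omega> \<phi> \<alpha>1 \<alpha>2 u)"
proof -
  have \<Omega>: "\<Omega> \<in> lmeasurable" by (rule lmeasurable_open[OF assms(1) assms(3)])
  have p: "1 < p" by (rule assms(9))
  have K: "bounded_linear_Lp \<Omega> p K" by (rule assms(11))
  have fs: "fs \<longlonglongrightarrow> f" by (rule assms(13))
  have nn: "\<And>x s. x \<in> \<Omega> \<Longrightarrow> 0 \<le> s \<Longrightarrow> 0 \<le> \<phi> x s"
    using assms(5) unfolding Phi_w_def by blast
  define T where "T v = TGV \<Omega> \<phi> \<alpha>1 \<alpha>2 v" for v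
  have Tnn: "0 \<le> T v" for v unfolding T_def by (rule TGV_nonneg[OF nn assms(7) assms(8)])
  have liminf_part: "ereal (1/2 * norm (K u - f)) + T u
      \<le> liminf (\<lambda>k. ereal (1/2 * norm (K (us k) - fs k)) + T (us k))"
    if u: "u \<in> Lp \<Omega> p" and us: "\<And>k. us k \<in> Lp \<Omega> p" and wc: "weak_conv_Lp \<Omega> p us u" for u us
  proof -
    have inn: "(\<lambda>k. inner (K u - f) (K (us k))) \<longlonglongrightarrow> inner (K u - f) (K u)"
      by (rule K_weak[OF \<Omega> p K u us wc])
    have A: "ereal (1/2 * norm (K u - f)) \<le> liminf (\<lambda>k. ereal (1/2 * norm (K (us k) - fs k)))"
      by (rule norm_liminf[OF inn fs])
    have B: "T u \<le> liminf (\<lambda>k. T (us k))" unfolding T_def by (rule TGV_liminf[OF \<Omega> p wc])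
    have A0: "0 \<le> liminf (\<lambda>k. ereal (1/2 * norm (K (us k) - fs k)))"
      by (rule Liminf_bounded) (simp add: always_eventually)
    have B0: "0 \<le> liminf (\<lambda>k. T (us k))"
      by (rule Liminf_bounded) (simp add: always_eventually Tnn)
    have "ereal (1/2 * norm (K u - f)) + T u
        \<le> liminf (\<lambda>k. ereal (1/2 * norm (K (us k) - fs k))) + liminf (\<lambda>k. T (us k))"
      by (rule add_mono[OF A B])
    also have "\<dots> \<le> liminf (\<lambda>k. ereal (1/2 * norm (K (us k) - fs k)) + T (us k))"
      by (rule ereal_liminf_add_mono) (use A0 B0 in auto)
    finally show ?thesis .
  qed
  have limsup_part: "limsup (\<lambda>k. ereal (1/2 * norm (K u - fs k)) + T u) \<le> ereal (1/2 * norm (K u - f)) + T u"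
    for u
  proof (cases "T u = \<infinity>")
    case True then show ?thesis by simp
  next
    case False
    then obtain t where t: "T u = ereal t" using Tnn[of u] by (cases "T u") auto
    have "(\<lambda>k. 1/2 * norm (K u - fs k) + t) \<longlonglongrightarrow> 1/2 * norm (K u - f) + t"
      by (intro tendsto_intros fs)
    then have "(\<lambda>k. ereal (1/2 * norm (K u - fs k) + t)) \<longlonglongrightarrow> ereal (1/2 * norm (K u - f) + t)"
      by (rule tendsto_ereal)
    then have "limsup (\<lambda>k. ereal (1/2 * norm (K u - fs k) + t)) = ereal (1/2 * norm (K u - f) + t)"
      by (rule lim_imp_Limsup[OF trivial_limit_sequentially])
    then show ?thesis by (simp add: t)
  qed
  show ?thesis unfolding Gamma_conv_weak_Lp_def T_def[symmetric]
  proof (intro ballI conjI allI impI)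
    fix u assume u: "u \<in> Lp \<Omega> p"
    fix us assume H: "(\<forall>k. us k \<in> Lp \<Omega> p) \<and> weak_conv_Lp \<Omega> p us u"
    then show "ereal (1/2 * norm (K u - f)) + T u \<le> liminf (\<lambda>k. ereal (1/2 * norm (K (us k) - fs k)) + T (us k))"
      using liminf_part[OF u] by blast
  next
    fix u assume u: "u \<in> Lp \<Omega> p"
    have wc: "weak_conv_Lp \<Omega> p (\<lambda>k. u) u" by (simp add: weak_conv_Lp_def)
    show "\<exists>us. (\<forall>k. us k \<in> Lp \<Omega> p) \<and> weak_conv_Lp \<Omega> p us u \<and>
          limsup (\<lambda>k. ereal (1/2 * norm (K (us k) - fs k)) + T (us k)) \<le> ereal (1/2 * norm (K u - f)) + T u"
      by (rule exI[of _ "\<lambda>k. u"]) (use u wc limsup_part[of u] in simp)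
  qed
qed

end
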